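(* Let $\Phi$ be an irreducible root system of rank $r$. For any $i\neq j$ in $\{0,1,\dots,r\}$ with $\gcd(m_i,m_j)=1$, the set $\Phi\cap\mathbb Z\{\tilde\alpha_k: k\in\{0,\dots,r\}\setminus\{i,j\}\}$ (the root subsystem generated by the roots of the nodes of the affine Dynkin diagram remaining after deleting the nodes $\tilde\alpha_i,\tilde\alpha_j$) is a good root subsystem of $\Phi$. Conversely, every good root subsystem of $\Phi$ is $W$-conjugate to one obtained in this way.
   Context: Let $\Phi$ be an irreducible reduced crystallographic root system of rank $r$ with Weyl group $W$, $\{\alpha_1,\dots,\alpha_r\}$ a base, and $\theta=\sum_{i=1}^r m_i\alpha_i$ the highest root (each $m_i$ a positive integer). Set $m_0=1$, $\tilde\alpha_0=-\theta$ and $\tilde\alpha_i=\alpha_i$ for $1\le i\le r$; $m_i$ is the Dynkin label of $\tilde\alpha_i$. $\mathbb Z\{\cdot\}$ denotes the integral span. A root subsystem $\Psi\subseteq\Phi$ is closed if $\lambda,\mu\in\Psi$, $\lambda+\mu\in\Phi$ imply $\lambda+\mu\in\Psi$; $\operatorname{rk}\Psi=\dim\operatorname{Span}\Psi$. A good root subsystem of $\Phi$ is a closed root subsystem of rank $r-1$ maximal under inclusion among closed root subsystems of rank $r-1$. *)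

theory Defs
  imports "HOL-Analysis.Analysis"
begin

text \<open>Root systems inside a real Euclidean space. The ambient space need not be
spanned by the roots; the rank is the dimension of the span of the roots.\<close>

definition coroot_pair :: "'a::euclidean_space \<Rightarrow> 'a \<Rightarrow> real" where
  "coroot_pair x \<alpha> = 2 * (x \<bullet> \<alpha>) / (\<alpha> \<bullet> \<alpha>)"

definition refl :: "'a::euclidean_space \<Rightarrow> 'a \<Rightarrow> 'a" where
  "refl \<alpha> x = x - coroot_pair x \<alpha> *\<^sub>R \<alpha>"

definition root_system :: "'a::euclidean_space set \<Rightarrow> bool" where
  "root_system \<Phi> \<longleftrightarrow> finite \<Phi> \<and> 0 \<notin> \<Phi>
     \<and> (\<forall>\<alpha>\<in>\<Phi>. \<forall>\<beta>\<in>\<Phi>. refl \<alpha> \<beta> \<in> \<Phi>)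
     \<and> (\<forall>\<alpha>\<in>\<Phi>. \<forall>\<beta>\<in>\<Phi>. coroot_pair \<beta> \<alpha> \<in> \<int>)
     \<and> (\<forall>\<alpha>\<in>\<Phi>. \<forall>c::real. c *\<^sub>R \<alpha> \<in> \<Phi> \<longrightarrow> c = 1 \<or> c = -1)"

definition irreducible_rs :: "'a::euclidean_space set \<Rightarrow> bool" where
  "irreducible_rs \<Phi> \<longleftrightarrow> \<Phi> \<noteq> {} \<and>
     \<not> (\<exists>A B. A \<noteq> {} \<and> B \<noteq> {} \<and> A \<union> B = \<Phi> \<and> A \<inter> B = {}
              \<and> (\<forall>a\<in>A. \<forall>b\<in>B. a \<bullet> b = 0))"

definition rank :: "'a::euclidean_space set \<Rightarrow> nat" where
  "rank \<Psi> = dim (span \<Psi>)"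

definition is_base :: "'a::euclidean_space set \<Rightarrow> nat \<Rightarrow> (nat \<Rightarrow> 'a) \<Rightarrow> bool" where
  "is_base \<Phi> r b \<longleftrightarrow> (\<forall>i\<in>{1..r}. b i \<in> \<Phi>) \<and> inj_on b {1..r}
     \<and> independent (b ` {1..r})
     \<and> (\<forall>\<beta>\<in>\<Phi>. \<exists>c::nat \<Rightarrow> int. \<beta> = (\<Sum>i=1..r. of_int (c i) *\<^sub>R b i)
            \<and> ((\<forall>i\<in>{1..r}. c i \<ge> 0) \<or> (\<forall>i\<in>{1..r}. c i \<le> 0)))"

definition is_highest_root :: "'a::euclidean_space set \<Rightarrow> nat \<Rightarrow> (nat \<Rightarrow> 'a) \<Rightarrow> 'a \<Rightarrow> (nat \<Rightarrow> int) \<Rightarrow> bool" where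
  "is_highest_root \<Phi> r b \<theta> m \<longleftrightarrow> \<theta> \<in> \<Phi> \<and> \<theta> = (\<Sum>i=1..r. of_int (m i) *\<^sub>R b i)
     \<and> (\<forall>\<beta>\<in>\<Phi>. \<exists>c::nat \<Rightarrow> int. \<theta> - \<beta> = (\<Sum>i=1..r. of_int (c i) *\<^sub>R b i)
            \<and> (\<forall>i\<in>{1..r}. c i \<ge> 0))"

definition aff_root :: "(nat \<Rightarrow> 'a::euclidean_space) \<Rightarrow> 'a \<Rightarrow> nat \<Rightarrow> 'a" where
  "aff_root b \<theta> i = (if i = 0 then - \<theta> else b i)"

definition aff_label :: "(nat \<Rightarrow> int) \<Rightarrow> nat \<Rightarrow> int" where
  "aff_label m i = (if i = 0 then 1 else m i)"

definition int_span :: "(nat \<Rightarrow> 'a::euclidean_space) \<Rightarrow> nat set \<Rightarrow> 'a set" where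
  "int_span f K = {x. \<exists>c::nat \<Rightarrow> int. x = (\<Sum>k\<in>K. of_int (c k) *\<^sub>R f k)}"

definition root_subsystem :: "'a::euclidean_space set \<Rightarrow> 'a set \<Rightarrow> bool" where
  "root_subsystem \<Phi> \<Psi> \<longleftrightarrow> \<Psi> \<subseteq> \<Phi> \<and> (\<forall>\<alpha>\<in>\<Psi>. \<forall>\<beta>\<in>\<Psi>. refl \<alpha> \<beta> \<in> \<Psi>)"

definition closed_subsystem :: "'a::euclidean_space set \<Rightarrow> 'a set \<Rightarrow> bool" where
  "closed_subsystem \<Phi> \<Psi> \<longleftrightarrow> root_subsystem \<Phi> \<Psi>
     \<and> (\<forall>x\<in>\<Psi>. \<forall>y\<in>\<Psi>. x + y \<in> \<Phi> \<longrightarrow> x + y \<in> \<Psi>)"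

definition good_subsystem :: "'a::euclidean_space set \<Rightarrow> 'a set \<Rightarrow> bool" where
  "good_subsystem \<Phi> \<Psi> \<longleftrightarrow> closed_subsystem \<Phi> \<Psi> \<and> rank \<Psi> = rank \<Phi> - 1
     \<and> (\<forall>\<Psi>'. closed_subsystem \<Phi> \<Psi>' \<and> rank \<Psi>' = rank \<Phi> - 1 \<and> \<Psi> \<subseteq> \<Psi>' \<longrightarrow> \<Psi>' = \<Psi>)"

inductive_set weyl_group :: "'a::euclidean_space set \<Rightarrow> ('a \<Rightarrow> 'a) set" for \<Phi> where
  weyl_id: "id \<in> weyl_group \<Phi>"
| weyl_step: "w \<in> weyl_group \<Phi> \<Longrightarrow> \<alpha> \<in> \<Phi> \<Longrightarrow> refl \<alpha> \<circ> w \<in> weyl_group \<Phi>"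

end

theory Submission
  imports Defs
begin

lemma refl_linear: "linear (refl a)"
  unfolding refl_def coroot_pair_def
  by (rule linearI) (auto simp: inner_add_left algebra_simps add_divide_distrib scaleR_add_left)

lemma refl_inner: "refl a x \<bullet> refl a y = x \<bullet> y"
proof (cases "a = 0")
  case True then show ?thesis by (simp add: refl_def coroot_pair_def)
next
  case False
  then have "a \<bullet> a \<noteq> 0" by simp
  then show ?thesis
    unfolding refl_def coroot_pair_def
    by (simp add: inner_diff_left inner_diff_right inner_commute field_simps)
qed

lemma refl_refl: "refl a (refl a x) = x"
proof (cases "a = 0")
  case True then show ?thesis by (simp add: refl_def coroot_pair_def)
next
  case False
  then have "a \<bullet> a \<noteq> 0" by simp
  then show ?thesis
    unfolding refl_def coroot_pair_def
    by (simp add: inner_diff_left field_simps scaleR_diff_left)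
qed

lemma weyl_comp: "w \<in> weyl_group \<Phi> \<Longrightarrow> v \<in> weyl_group \<Phi> \<Longrightarrow> w \<circ> v \<in> weyl_group \<Phi>"
  by (induction w rule: weyl_group.induct) (auto simp: o_assoc[symmetric] intro: weyl_group.intros)

lemma weyl_refl: "a \<in> \<Phi> \<Longrightarrow> refl a \<in> weyl_group \<Phi>"
  using weyl_step[OF weyl_id] by simp

lemma weyl_inv: "w \<in> weyl_group \<Phi> \<Longrightarrow> \<exists>v\<in>weyl_group \<Phi>. (\<forall>x. v (w x) = x) \<and> (\<forall>x. w (v x) = x)"
proof (induction w rule: weyl_group.induct)
  case weyl_id then show ?case by (intro bexI[of _ id]) (auto intro: weyl_group.intros)
next
  case (weyl_step w a)
  then obtain v where v: "v \<in> weyl_group \<Phi>" "\<forall>x. v (w x) = x" "\<forall>x. w (v x) = x" by blast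
  have "v \<circ> refl a \<in> weyl_group \<Phi>" using weyl_comp[OF v(1) weyl_refl[OF weyl_step(2)]] .
  then show ?case using v by (auto intro!: bexI[of _ "v \<circ> refl a"] simp: refl_refl)
qed

lemma weyl_linear: "w \<in> weyl_group \<Phi> \<Longrightarrow> linear w"
proof (induction w rule: weyl_group.induct)
  case weyl_id then show ?case using linear_id by (simp add: id_def)
next
  case (weyl_step w a) then show ?case using linear_compose[OF weyl_step(3) refl_linear] by (simp add: o_def)
qed

lemma weyl_inner: "w \<in> weyl_group \<Phi> \<Longrightarrow> w x \<bullet> w y = x \<bullet> y"
  by (induction w rule: weyl_group.induct) (auto simp: refl_inner)

lemma weyl_Phi: "w \<in> weyl_group \<Phi> \<Longrightarrow> root_system \<Phi> \<Longrightarrow> x \<in> \<Phi> \<Longrightarrow> w x \<in> \<Phi>"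
  by (induction w rule: weyl_group.induct) (auto simp: root_system_def)

lemma int_span_add: "x \<in> int_span f K \<Longrightarrow> y \<in> int_span f K \<Longrightarrow> x + y \<in> int_span f K"
  unfolding int_span_def
proof clarify
  fix c d :: "nat \<Rightarrow> int"
  show "\<exists>e. (\<Sum>k\<in>K. of_int (c k) *\<^sub>R f k) + (\<Sum>k\<in>K. of_int (d k) *\<^sub>R f k) = (\<Sum>k\<in>K. of_int (e k) *\<^sub>R f k)"
    by (rule exI[of _ "\<lambda>k. c k + d k"]) (simp add: scaleR_add_left sum.distrib)
qed

lemma int_span_scale: "z \<in> \<int> \<Longrightarrow> x \<in> int_span f K \<Longrightarrow> z *\<^sub>R x \<in> int_span f K"
  unfolding int_span_def
proof (clarify elim!: Ints_cases)
  fix c :: "nat \<Rightarrow> int" and n :: int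
  show "\<exists>e. of_int n *\<^sub>R (\<Sum>k\<in>K. of_int (c k) *\<^sub>R f k) = (\<Sum>k\<in>K. of_int (e k) *\<^sub>R f k)"
    by (rule exI[of _ "\<lambda>k. n * c k"]) (simp add: scaleR_sum_right)
qed

lemma int_span_base: "finite K \<Longrightarrow> k \<in> K \<Longrightarrow> f k \<in> int_span f K"
  unfolding int_span_def
proof -
  assume "finite K" "k \<in> K"
  have "(\<Sum>x\<in>K. of_int (if x = k then 1 else 0) *\<^sub>R f x) = (\<Sum>x\<in>K. if x = k then f x else 0)"
    by (rule sum.cong) auto
  also have "\<dots> = f k" using \<open>finite K\<close> \<open>k \<in> K\<close> by (simp add: sum.delta)
  finally show "f k \<in> {x. \<exists>c. x = (\<Sum>k\<in>K. real_of_int (c k) *\<^sub>R f k)}"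
    by (auto intro!: exI[of _ "\<lambda>x. if x = k then 1 else 0"])
qed

lemma int_span_span: "int_span f K \<subseteq> span (f ` K)"
  unfolding int_span_def by clarify (intro span_sum span_scale span_base; simp)

locale rsetup =
  fixes \<Phi> :: "'a::euclidean_space set" and r :: nat and b :: "nat \<Rightarrow> 'a"
    and \<theta> :: 'a and m :: "nat \<Rightarrow> int"
  assumes rs: "root_system \<Phi>" and irr: "irreducible_rs \<Phi>" and rk: "rank \<Phi> = r"
    and base: "is_base \<Phi> r b" and hr: "is_highest_root \<Phi> r b \<theta> m"
begin

lemma fin: "finite \<Phi>" and zero_notin: "0 \<notin> \<Phi>"
  and refl_in: "\<alpha> \<in> \<Phi> \<Longrightarrow> \<beta> \<in> \<Phi> \<Longrightarrow> refl \<alpha> \<beta> \<in> \<Phi>"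
  and cp_int: "\<alpha> \<in> \<Phi> \<Longrightarrow> \<beta> \<in> \<Phi> \<Longrightarrow> coroot_pair \<beta> \<alpha> \<in> \<int>"
  using rs by (auto simp: root_system_def)

lemma b_in: "i \<in> {1..r} \<Longrightarrow> b i \<in> \<Phi>"
  using base by (auto simp: is_base_def)

lemma coords: "\<beta> \<in> \<Phi> \<Longrightarrow> \<exists>c::nat \<Rightarrow> int. \<beta> = (\<Sum>i=1..r. of_int (c i) *\<^sub>R b i)
            \<and> ((\<forall>i\<in>{1..r}. c i \<ge> 0) \<or> (\<forall>i\<in>{1..r}. c i \<le> 0))"
  using base by (auto simp: is_base_def)

lemma theta_in: "\<theta> \<in> \<Phi>" and theta_eq: "\<theta> = (\<Sum>i=1..r. of_int (m i) *\<^sub>R b i)"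
  using hr by (auto simp: is_highest_root_def)

lemma uniq0:
  assumes "(\<Sum>l=1..r. x l *\<^sub>R b l) = 0" "l \<in> {1..r}"
  shows "x l = 0"
proof -
  have inj: "inj_on b {1..r}" and ind: "independent (b ` {1..r})" using base by (auto simp: is_base_def)
  define c where "c v = x (the_inv_into {1..r} b v)" for v
  have "(\<Sum>v\<in>b ` {1..r}. c v *\<^sub>R v) = (\<Sum>l=1..r. c (b l) *\<^sub>R b l)"
    by (rule sum.reindex[OF inj, unfolded o_def])
  also have "\<dots> = (\<Sum>l=1..r. x l *\<^sub>R b l)"
  proof (rule sum.cong)
    fix l assume "l \<in> {1..r}"
    then show "c (b l) *\<^sub>R b l = x l *\<^sub>R b l" using the_inv_into_f_f[OF inj \<open>l \<in> {1..r}\<close>] by (simp add: c_def)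
  qed simp
  finally have "(\<Sum>v\<in>b ` {1..r}. c v *\<^sub>R v) = 0" using assms(1) by simp
  then have "c (b l) = 0" using ind assms(2) unfolding independent_explicit by blast
  then show ?thesis using the_inv_into_f_f[OF inj assms(2)] by (simp add: c_def)
qed

lemma uniq:
  assumes "(\<Sum>l=1..r. x l *\<^sub>R b l) = (\<Sum>l=1..r. y l *\<^sub>R b l)" "l \<in> {1..r}"
  shows "x l = y l"
proof -
  have "(\<Sum>l=1..r. (x l - y l) *\<^sub>R b l) = 0"
    using assms(1) by (simp add: scaleR_diff_left sum_subtractf)
  from uniq0[OF this assms(2)] show ?thesis by simp
qed

lemma r_pos: "r \<ge> 1"
proof (rule ccontr)
  assume "\<not> r \<ge> 1"
  then have r0: "r = 0" by simp
  obtain \<beta> where "\<beta> \<in> \<Phi>" using irr by (auto simp: irreducible_rs_def)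
  then obtain c where "\<beta> = (\<Sum>i=1..r. of_int (c i) *\<^sub>R b i)" using coords by blast
  then have "\<beta> = 0" using r0 by simp
  with \<open>\<beta> \<in> \<Phi>\<close> zero_notin show False by simp
qed

lemma span_Phi: "span \<Phi> = span (b ` {1..r})"
proof
  show "span \<Phi> \<subseteq> span (b ` {1..r})"
  proof (rule span_minimal[OF _ subspace_span])
    show "\<Phi> \<subseteq> span (b ` {1..r})"
    proof
      fix \<beta> assume "\<beta> \<in> \<Phi>"
      then obtain c where "\<beta> = (\<Sum>i=1..r. of_int (c i) *\<^sub>R b i)" using coords by blast
      have "(\<Sum>i=1..r. of_int (c i) *\<^sub>R b i) \<in> span (b ` {1..r})"
        by (intro span_sum span_scale span_base) auto
      then show "\<beta> \<in> span (b ` {1..r})" using \<open>\<beta> = _\<close> by simp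
    qed
  qed
  show "span (b ` {1..r}) \<subseteq> span \<Phi>"
    using b_in by (intro span_mono) auto
qed

lemma expand:
  assumes K: "K \<subseteq> {0..r}"
  shows "(\<Sum>k\<in>K. s k *\<^sub>R aff_root b \<theta> k) =
    (\<Sum>l=1..r. ((if 0 \<in> K then - s 0 * of_int (m l) else 0) + (if l \<in> K then s l else 0)) *\<^sub>R b l)"
proof -
  have fK: "finite K" using K finite_subset by blast
  have A: "(\<Sum>k\<in>K-{0}. s k *\<^sub>R aff_root b \<theta> k) = (\<Sum>l=1..r. (if l \<in> K then s l else 0) *\<^sub>R b l)"
  proof -
    have "K - {0} = {1..r} \<inter> K" using K by auto
    then have "(\<Sum>k\<in>K-{0}. s k *\<^sub>R aff_root b \<theta> k) = (\<Sum>k\<in>{1..r} \<inter> K. s k *\<^sub>R b k)"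
      by (auto simp: aff_root_def intro!: sum.cong)
    also have "\<dots> = (\<Sum>l=1..r. if l \<in> K then s l *\<^sub>R b l else 0)"
      by (rule sum.inter_restrict) simp
    also have "\<dots> = (\<Sum>l=1..r. (if l \<in> K then s l else 0) *\<^sub>R b l)"
      by (rule sum.cong) auto
    finally show ?thesis .
  qed
  show ?thesis
  proof (cases "0 \<in> K")
    case True
    have "(\<Sum>k\<in>K. s k *\<^sub>R aff_root b \<theta> k) = s 0 *\<^sub>R aff_root b \<theta> 0 + (\<Sum>k\<in>K-{0}. s k *\<^sub>R aff_root b \<theta> k)"
      using sum.remove[OF fK True] by simp
    also have "s 0 *\<^sub>R aff_root b \<theta> 0 = (\<Sum>l=1..r. (- s 0 * of_int (m l)) *\<^sub>R b l)"
      by (simp add: aff_root_def theta_eq[symmetric] scaleR_sum_right sum_negf[symmetric])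
        (simp add: theta_eq scaleR_sum_right sum_negf[symmetric])
    finally have "(\<Sum>k\<in>K. s k *\<^sub>R aff_root b \<theta> k) = (\<Sum>l=1..r. (- s 0 * of_int (m l)) *\<^sub>R b l) + (\<Sum>l=1..r. (if l \<in> K then s l else 0) *\<^sub>R b l)"
      using A by simp
    also have "\<dots> = (\<Sum>l=1..r. ((- s 0 * of_int (m l)) + (if l \<in> K then s l else 0)) *\<^sub>R b l)"
      by (simp only: scaleR_add_left sum.distrib)
    finally show ?thesis using True by simp
  next
    case False
    then have "K - {0} = K" by auto
    then show ?thesis using A False by simp
  qed
qed


lemma theta_nz: "\<theta> \<noteq> 0" using theta_in zero_notin by auto

lemma aff_in: "k \<le> r \<Longrightarrow> aff_root b \<theta> k \<in> \<Phi>"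
proof (cases "k = 0")
  case True
  have "refl \<theta> \<theta> = - \<theta>" using theta_nz
    by (simp add: refl_def coroot_pair_def scaleR_2)
  then show ?thesis using True refl_in[OF theta_in theta_in] by (simp add: aff_root_def)
next
  case False
  then show "k \<le> r \<Longrightarrow> ?thesis" using b_in by (simp add: aff_root_def)
qed

context
  fixes i j :: nat
  assumes ij: "i \<le> r" "j \<le> r" "i \<noteq> j" "gcd (aff_label m i) (aff_label m j) = 1"
begin

definition "KK = {0..r} - {i, j}"

lemma KK_sub: "KK \<subseteq> {0..r}" by (auto simp: KK_def)
lemma KK_fin: "finite KK" by (simp add: KK_def)

lemma fam_indep:
  assumes "(\<Sum>k\<in>KK. s k *\<^sub>R aff_root b \<theta> k) = 0" "k \<in> KK"
  shows "s k = 0"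
proof -
  define e where "e l = ((if 0 \<in> KK then - s 0 * of_int (m l) else 0) + (if l \<in> KK then s l else 0))" for l
  have E: "(\<Sum>l=1..r. e l *\<^sub>R b l) = 0" using assms(1) expand[OF KK_sub, of s] by (simp add: e_def)
  have e0: "l \<in> {1..r} \<Longrightarrow> e l = 0" for l using uniq0[OF E] .
  show ?thesis
  proof (cases "0 \<in> KK")
    case False
    then have "k \<ge> 1" using assms(2) by (cases k) auto
    then show ?thesis using e0[of k] False assms(2) KK_sub by (auto simp: e_def)
  next
    case True
    then have i1: "i \<in> {1..r}" and j1: "j \<in> {1..r}" using ij by (auto simp: KK_def)
    then have "i \<notin> KK" "j \<notin> KK" by (auto simp: KK_def)
    then have "s 0 * of_int (m i) = 0" "s 0 * of_int (m j) = 0"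
      using e0[OF i1] e0[OF j1] True by (auto simp: e_def)
    moreover have "m i \<noteq> 0 \<or> m j \<noteq> 0" using ij(4) i1 j1 by (auto simp: aff_label_def)
    ultimately have s0: "s 0 = 0" by auto
    show ?thesis
    proof (cases "k = 0")
      case True then show ?thesis using s0 by simp
    next
      case False
      then have "k \<in> {1..r}" using assms(2) KK_sub by auto
      then show ?thesis using e0[of k] s0 assms(2) by (auto simp: e_def split: if_splits)
    qed
  qed
qed

lemma aff_inj: "inj_on (aff_root b \<theta>) KK"
proof (rule inj_onI, rule ccontr)
  fix k k' assume kk: "k \<in> KK" "k' \<in> KK" "aff_root b \<theta> k = aff_root b \<theta> k'" "k \<noteq> k'"
  define s where "s x = (if x = k then 1 else 0) - (if x = k' then 1 else (0::real))" for x
  have "(\<Sum>x\<in>KK. s x *\<^sub>R aff_root b \<theta> x) =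
     (\<Sum>x\<in>KK. if x = k then aff_root b \<theta> x else 0) - (\<Sum>x\<in>KK. if x = k' then aff_root b \<theta> x else 0)"
  proof -
    have "\<And>x. s x *\<^sub>R aff_root b \<theta> x = (if x = k then aff_root b \<theta> x else 0) - (if x = k' then aff_root b \<theta> x else 0)"
      by (simp add: s_def scaleR_diff_left)
    then show ?thesis by (simp add: sum_subtractf)
  qed
  also have "\<dots> = 0" using kk KK_fin by (simp add: sum.delta)
  finally have "s k = 0" using fam_indep kk(1) by blast
  then show False using kk(4) by (simp add: s_def)
qed

lemma aff_indep: "independent (aff_root b \<theta> ` KK)"
proof (rule independent_if_scalars_zero)
  show "finite (aff_root b \<theta> ` KK)" using KK_fin by simp
  fix f x assume "(\<Sum>x\<in>aff_root b \<theta> ` KK. f x *\<^sub>R x) = 0" "x \<in> aff_root b \<theta> ` KK"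
  then obtain k where k: "k \<in> KK" "x = aff_root b \<theta> k" by auto
  have "(\<Sum>x\<in>aff_root b \<theta> ` KK. f x *\<^sub>R x) = (\<Sum>k\<in>KK. f (aff_root b \<theta> k) *\<^sub>R aff_root b \<theta> k)"
    by (rule sum.reindex[OF aff_inj, unfolded o_def])
  then have "f (aff_root b \<theta> k) = 0"
    using fam_indep[of "\<lambda>k. f (aff_root b \<theta> k)" k] k \<open>(\<Sum>x\<in>_. _) = 0\<close> by simp
  then show "f x = 0" using k by simp
qed

lemma key:
  assumes "\<beta> \<in> \<Phi>" "\<beta> \<in> span (aff_root b \<theta> ` KK)"
  shows "\<beta> \<in> int_span (aff_root b \<theta>) KK"
proof -
  obtain u where "\<beta> = (\<Sum>v\<in>aff_root b \<theta> ` KK. u v *\<^sub>R v)"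
    using assms(2) span_finite[of "aff_root b \<theta> ` KK"] KK_fin by auto
  also have "\<dots> = (\<Sum>k\<in>KK. u (aff_root b \<theta> k) *\<^sub>R aff_root b \<theta> k)"
    by (rule sum.reindex[OF aff_inj, unfolded o_def])
  finally have bs: "\<beta> = (\<Sum>k\<in>KK. s k *\<^sub>R aff_root b \<theta> k)" if "s = (\<lambda>k. u (aff_root b \<theta> k))" for s
    using that by simp
  define s where "s = (\<lambda>k. u (aff_root b \<theta> k))"
  have bs': "\<beta> = (\<Sum>k\<in>KK. s k *\<^sub>R aff_root b \<theta> k)" using bs s_def by simp
  define e where "e l = ((if 0 \<in> KK then - s 0 * of_int (m l) else 0) + (if l \<in> KK then s l else 0))" for l
  have E: "\<beta> = (\<Sum>l=1..r. e l *\<^sub>R b l)" using bs' expand[OF KK_sub, of s] by (simp add: e_def)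
  obtain c where c: "\<beta> = (\<Sum>l=1..r. of_int (c l) *\<^sub>R b l)" using coords[OF assms(1)] by blast
  have ce: "l \<in> {1..r} \<Longrightarrow> of_int (c l) = e l" for l using uniq[of "\<lambda>l. of_int (c l)" e l] c E by simp
  have sint: "s k \<in> \<int>" if k: "k \<in> KK" for k
  proof (cases "0 \<in> KK")
    case False
    then have "k \<in> {1..r}" using k KK_sub by (cases k) auto
    then have "s k = of_int (c k)" using ce[of k] False k by (auto simp: e_def)
    then show ?thesis by simp
  next
    case True
    then have i1: "i \<in> {1..r}" and j1: "j \<in> {1..r}" using ij by (auto simp: KK_def)
    then have "i \<notin> KK" "j \<notin> KK" by (auto simp: KK_def)
    then have ci: "of_int (c i) = - s 0 * of_int (m i)" and cj: "of_int (c j) = - s 0 * of_int (m j)"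
      using ce[OF i1] ce[OF j1] True by (auto simp: e_def)
    have g: "gcd (m i) (m j) = 1" using ij(4) i1 j1 by (auto simp: aff_label_def)
    obtain x y where xy: "x * m i + y * m j = 1" using bezout_int[of "m i" "m j"] g by auto
    have "s 0 = s 0 * of_int (x * m i + y * m j)" using xy by simp
    also have "\<dots> = - (of_int x * of_int (c i) + of_int y * of_int (c j))"
      using ci cj by (simp add: algebra_simps)
    also have "\<dots> = of_int (- (x * c i + y * c j))" by simp
    finally have s0: "s 0 \<in> \<int>" by (metis Ints_of_int)
    show ?thesis
    proof (cases "k = 0")
      case True then show ?thesis using s0 by simp
    next
      case False
      then have k1: "k \<in> {1..r}" using k KK_sub by auto
      then have "s k = of_int (c k) + s 0 * of_int (m k)" using ce[OF k1] k True by (simp add: e_def)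
      then show ?thesis using s0 by (simp add: Ints_add Ints_mult)
    qed
  qed
  define d where "d k = \<lfloor>s k\<rfloor>" for k
  have "\<beta> = (\<Sum>k\<in>KK. of_int (d k) *\<^sub>R aff_root b \<theta> k)"
    unfolding bs' by (rule sum.cong) (auto simp: d_def dest!: sint elim!: Ints_cases)
  then show ?thesis by (auto simp: int_span_def)
qed


lemma part1: "good_subsystem \<Phi> (\<Phi> \<inter> int_span (aff_root b \<theta>) KK)"
proof -
  let ?a = "aff_root b \<theta>"
  define S where "S = \<Phi> \<inter> int_span ?a KK"
  have rsub: "root_subsystem \<Phi> S"
    unfolding root_subsystem_def
  proof (intro conjI ballI)
    show "S \<subseteq> \<Phi>" by (simp add: S_def)
    fix \<alpha> \<beta> assume "\<alpha> \<in> S" "\<beta> \<in> S"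
    then have "\<alpha> \<in> \<Phi>" "\<beta> \<in> \<Phi>" "\<alpha> \<in> int_span ?a KK" "\<beta> \<in> int_span ?a KK" by (auto simp: S_def)
    have "refl \<alpha> \<beta> = \<beta> + (- coroot_pair \<beta> \<alpha>) *\<^sub>R \<alpha>" by (simp add: refl_def)
    also have "\<dots> \<in> int_span ?a KK"
      using cp_int[OF \<open>\<alpha> \<in> \<Phi>\<close> \<open>\<beta> \<in> \<Phi>\<close>] \<open>\<alpha> \<in> int_span _ _\<close> \<open>\<beta> \<in> int_span _ _\<close>
      by (intro int_span_add int_span_scale) auto
    finally show "refl \<alpha> \<beta> \<in> S" using refl_in[OF \<open>\<alpha> \<in> \<Phi>\<close> \<open>\<beta> \<in> \<Phi>\<close>] by (simp add: S_def)
  qed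
  have closed: "closed_subsystem \<Phi> S"
    unfolding closed_subsystem_def using rsub by (auto simp: S_def intro: int_span_add)
  have sub1: "?a ` KK \<subseteq> S"
    using aff_in KK_sub int_span_base[OF KK_fin] by (auto simp: S_def)
  have sub2: "S \<subseteq> span (?a ` KK)" using int_span_span by (auto simp: S_def)
  have spanS: "span S = span (?a ` KK)"
    using span_mono[OF sub1] span_mono[OF sub2] by (simp add: span_span) 
  have cardK: "card KK = r - 1"
  proof -
    have "card KK = card {0..r} - card {i, j}" unfolding KK_def
      by (rule card_Diff_subset) (use ij in auto)
    then show ?thesis using ij(3) by simp
  qed
  have rankS: "rank S = r - 1"
    unfolding rank_def dim_span spanS[symmetric, THEN arg_cong[where f = dim], simplified dim_span, symmetric]
    using dim_eq_card_independent[OF aff_indep] card_image[OF aff_inj] cardK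
    by (metis dim_span spanS)
  show ?thesis
    unfolding good_subsystem_def S_def[symmetric]
  proof (intro conjI allI impI)
    show "closed_subsystem \<Phi> S" by fact
    show "rank S = rank \<Phi> - 1" using rankS rk by simp
    fix \<Psi>' assume H: "closed_subsystem \<Phi> \<Psi>' \<and> rank \<Psi>' = rank \<Phi> - 1 \<and> S \<subseteq> \<Psi>'"
    then have "span S = span \<Psi>'"
      using rankS rk by (intro dim_eq_span) (auto simp: rank_def)
    then have "\<Psi>' \<subseteq> span (?a ` KK)" using spanS span_superset by blast
    moreover have "\<Psi>' \<subseteq> \<Phi>" using H by (auto simp: closed_subsystem_def root_subsystem_def)
    ultimately have "\<Psi>' \<subseteq> S" using key by (auto simp: S_def)
    then show "\<Psi>' = S" using H by auto
  qed
qed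

lemma part1': "good_subsystem \<Phi> (\<Phi> \<inter> int_span (aff_root b \<theta>) ({0..r} - {i, j}))"
  using part1 unfolding KK_def .

end

lemma sum_same_sign_zero:
  fixes t :: "nat \<Rightarrow> real"
  assumes "finite A" "sum t A = 0" "(\<forall>l\<in>A. t l \<ge> 0) \<or> (\<forall>l\<in>A. t l \<le> 0)" "l \<in> A"
  shows "t l = 0"
  using assms
proof (elim disjE)
  assume "\<forall>l\<in>A. t l \<ge> 0" then show ?thesis using assms sum_nonneg_eq_0_iff by blast
next
  assume H: "\<forall>l\<in>A. t l \<le> 0"
  have "sum (\<lambda>l. - t l) A = 0" using assms(2) by (simp add: sum_negf)
  then have "- t l = 0" using H assms sum_nonneg_eq_0_iff[of A "\<lambda>l. - t l"] by auto
  then show ?thesis by simp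
qed

lemma b_nz: "l \<in> {1..r} \<Longrightarrow> b l \<noteq> 0" using b_in zero_notin by force

lemma part2:
  assumes good: "good_subsystem \<Phi> \<Psi>"
  shows "\<exists>i j w. i \<le> r \<and> j \<le> r \<and> i \<noteq> j \<and> gcd (aff_label m i) (aff_label m j) = 1
               \<and> w \<in> weyl_group \<Phi>
               \<and> \<Psi> = w ` (\<Phi> \<inter> int_span (aff_root b \<theta>) ({0..r} - {i, j}))"
proof -
  have closedPsi: "closed_subsystem \<Phi> \<Psi>" and rankPsi: "rank \<Psi> = r - 1"
    and maxi: "\<And>\<Psi>'. closed_subsystem \<Phi> \<Psi>' \<Longrightarrow> rank \<Psi>' = r - 1 \<Longrightarrow> \<Psi> \<subseteq> \<Psi>' \<Longrightarrow> \<Psi>' = \<Psi>"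
    using good rk by (auto simp: good_subsystem_def)
  have PsiPhi: "\<Psi> \<subseteq> \<Phi>" using closedPsi by (auto simp: closed_subsystem_def root_subsystem_def)
  have rPhi: "dim \<Phi> = r" using rk by (simp add: rank_def)
  have "span \<Psi> \<subset> span \<Phi>"
  proof -
    have "span \<Psi> \<subseteq> span \<Phi>" using PsiPhi span_mono by blast
    moreover have "span \<Psi> \<noteq> span \<Phi>"
    proof
      assume "span \<Psi> = span \<Phi>"
      then have "dim \<Psi> = dim \<Phi>" by (metis dim_span)
      then show False using rankPsi rPhi r_pos by (simp add: rank_def)
    qed
    ultimately show ?thesis by blast
  qed
  then obtain lm where lam: "lm \<noteq> 0" "lm \<in> span \<Phi>" "\<And>y. y \<in> span \<Psi> \<Longrightarrow> orthogonal lm y"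
    using orthogonal_to_subspace_exists_gen by metis
  define \<Psi>2 where "\<Psi>2 = {\<beta>\<in>\<Phi>. \<beta> \<bullet> lm = 0}"
  have Psi_sub: "\<Psi> \<subseteq> \<Psi>2"
    using lam(3) PsiPhi span_superset by (fastforce simp: \<Psi>2_def orthogonal_def inner_commute)
  have closed2: "closed_subsystem \<Phi> \<Psi>2"
    unfolding closed_subsystem_def root_subsystem_def \<Psi>2_def
    by (auto simp: refl_in, auto simp: refl_def inner_diff_left inner_add_left)
  have rank2: "rank \<Psi>2 = r - 1"
  proof -
    have "dim \<Psi>2 \<ge> r - 1" using dim_subset[OF Psi_sub] rankPsi by (simp add: rank_def)
    moreover have "span \<Psi>2 \<subset> span \<Phi>"
    proof -
      have "span \<Psi>2 \<subseteq> span \<Phi>" by (intro span_mono) (auto simp: \<Psi>2_def)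
      moreover have "lm \<notin> span \<Psi>2"
      proof
        assume "lm \<in> span \<Psi>2"
        then have "orthogonal lm lm"
          by (rule orthogonal_to_span) (auto simp: \<Psi>2_def orthogonal_def inner_commute)
        then show False using lam(1) by (simp add: orthogonal_def)
      qed
      ultimately show ?thesis using lam(2) by blast
    qed
    then have "dim \<Psi>2 < r" using dim_psubset[of \<Psi>2 \<Phi>] rPhi by simp
    ultimately show ?thesis by (simp add: rank_def)
  qed
  have PsiEq: "\<Psi> = \<Psi>2" using maxi[OF closed2 rank2 Psi_sub] by simp
  have indb: "independent (b ` {1..r})" using base by (simp add: is_base_def)
  obtain g :: "'a \<Rightarrow> real" where lg: "linear g" and g1: "\<And>x. x \<in> b ` {1..r} \<Longrightarrow> g x = 1"
    using linear_independent_extend[OF indb, of "\<lambda>_. 1"] by blast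
  define Orb where "Orb = {w lm | w. w \<in> weyl_group \<Phi>}"
  have O_span: "x \<in> Orb \<Longrightarrow> x \<in> span \<Phi>" for x
  proof -
    assume "x \<in> Orb"
    then obtain w where w: "w \<in> weyl_group \<Phi>" "x = w lm" by (auto simp: Orb_def)
    have "w ` span \<Phi> = span (w ` \<Phi>)" using span_linear_image[OF weyl_linear[OF w(1)]] by simp
    also have "\<dots> \<subseteq> span \<Phi>" using weyl_Phi[OF w(1) rs] by (intro span_mono) auto
    finally show ?thesis using w lam(2) by auto
  qed
  have finO: "finite Orb"
  proof -
    define T where "T = (\<lambda>\<gamma>. lm \<bullet> \<gamma>) ` \<Phi>"
    define h where "h x = restrict (\<lambda>l. x \<bullet> b l) {1..r}" for x
    have sub: "h ` Orb \<subseteq> PiE {1..r} (\<lambda>_. T)"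
    proof
      fix y assume "y \<in> h ` Orb"
      then obtain x where x: "x \<in> Orb" "y = h x" by blast
      then obtain w where w0: "w \<in> weyl_group \<Phi>" "x = w lm" unfolding Orb_def by blast
      then have w: "w \<in> weyl_group \<Phi>" "y = h (w lm)" using x by auto
      obtain v where v: "v \<in> weyl_group \<Phi>" "\<forall>x. v (w x) = x" "\<forall>x. w (v x) = x" using weyl_inv[OF w(1)] by blast
      have "w lm \<bullet> b l \<in> T" if "l \<in> {1..r}" for l
      proof -
        have "w lm \<bullet> b l = w lm \<bullet> w (v (b l))" using v by simp
        also have "\<dots> = lm \<bullet> v (b l)" using weyl_inner[OF w(1)] .
        finally have "w lm \<bullet> b l = lm \<bullet> v (b l)" .
        then show ?thesis unfolding T_def using weyl_Phi[OF v(1) rs b_in[OF that]] by blast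
      qed
      then show "y \<in> PiE {1..r} (\<lambda>_. T)" unfolding w(2) h_def by (simp add: restrict_PiE_iff)
    qed
    have inj: "inj_on h Orb"
    proof (rule inj_onI)
      fix x y assume xy: "x \<in> Orb" "y \<in> Orb" "h x = h y"
      have "(x - y) \<bullet> b l = 0" if "l \<in> {1..r}" for l
      proof -
        have "h x l = h y l" using xy(3) by simp
        then show ?thesis using that by (simp add: h_def inner_diff_left)
      qed
      then have "\<forall>l\<in>{1..r}. (x - y) \<bullet> b l = 0" by blast
      moreover have "x - y \<in> span (b ` {1..r})"
        using span_diff[OF O_span[OF xy(1)] O_span[OF xy(2)]] span_Phi by simp
      ultimately have "orthogonal (x - y) (x - y)"
        by - (rule orthogonal_to_span[where S="b ` {1..r}"], auto simp: orthogonal_def)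
      then show "x = y" by (simp add: orthogonal_def)
    qed
    have fP: "finite (PiE {1..r} (\<lambda>_. T))" using fin by (intro finite_PiE) (auto simp: T_def)
    show ?thesis by (rule inj_on_finite[OF inj sub fP])
  qed
  have lamO: "lm \<in> Orb" unfolding Orb_def by (rule CollectI, rule exI[of _ id]) (simp add: weyl_id)
  define M where "M = Max (g ` Orb)"
  have "M \<in> g ` Orb" unfolding M_def using finO lamO by (intro Max_in) auto
  then obtain \<mu> where mu: "\<mu> \<in> Orb" "g \<mu> = M" by auto
  have gmax: "x \<in> Orb \<Longrightarrow> g x \<le> g \<mu>" for x unfolding mu(2) M_def using finO by (intro Max_ge) auto
  obtain w0 where w0: "w0 \<in> weyl_group \<Phi>" "\<mu> = w0 lm" using mu(1) unfolding Orb_def by blast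
  have dom: "\<mu> \<bullet> b l \<ge> 0" if l: "l \<in> {1..r}" for l
  proof (rule ccontr)
    assume neg: "\<not> \<mu> \<bullet> b l \<ge> 0"
    have "b l \<bullet> b l > 0" using b_nz[OF l] by simp
    then have cpneg: "coroot_pair \<mu> (b l) < 0" using neg by (simp add: coroot_pair_def divide_neg_pos)
    have "refl (b l) \<mu> \<in> Orb" unfolding Orb_def w0(2)
      using weyl_step[OF w0(1) b_in[OF l]] by (intro CollectI exI[of _ "refl (b l) \<circ> w0"]) simp
    then have "g (refl (b l) \<mu>) \<le> g \<mu>" by (rule gmax)
    moreover have "g (refl (b l) \<mu>) = g \<mu> - coroot_pair \<mu> (b l)"
      unfolding refl_def using linear_diff[OF lg] linear_scale[OF lg] g1 l by simp
    ultimately show False using cpneg by simp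
  qed
  obtain v where v: "v \<in> weyl_group \<Phi>" "\<forall>x. v (w0 x) = x" "\<forall>x. w0 (v x) = x" using weyl_inv[OF w0(1)] by blast
  have lam_v: "lm = v \<mu>" using v w0 by simp
  define Z where "Z = {\<gamma>\<in>\<Phi>. \<gamma> \<bullet> \<mu> = 0}"
  have PsiZ: "\<Psi> = v ` Z"
  proof
    show "\<Psi> \<subseteq> v ` Z"
    proof
      fix \<beta> assume "\<beta> \<in> \<Psi>"
      then have b: "\<beta> \<in> \<Phi>" "\<beta> \<bullet> lm = 0" using PsiEq by (auto simp: \<Psi>2_def)
      have "w0 \<beta> \<in> Z" using weyl_Phi[OF w0(1) rs b(1)] weyl_inner[OF w0(1)] b(2) w0(2) by (simp add: Z_def)
      moreover have "\<beta> = v (w0 \<beta>)" using v by simp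
      ultimately show "\<beta> \<in> v ` Z" by blast
    qed
    show "v ` Z \<subseteq> \<Psi>"
    proof
      fix \<beta> assume "\<beta> \<in> v ` Z"
      then obtain \<gamma> where g: "\<gamma> \<in> \<Phi>" "\<gamma> \<bullet> \<mu> = 0" "\<beta> = v \<gamma>" by (auto simp: Z_def)
      have "v \<gamma> \<bullet> v \<mu> = 0" using weyl_inner[OF v(1)] g(2) by simp
      then show "\<beta> \<in> \<Psi>" using weyl_Phi[OF v(1) rs g(1)] g(3) lam_v PsiEq by (simp add: \<Psi>2_def)
    qed
  qed
  define P where "P = {l\<in>{1..r}. \<mu> \<bullet> b l \<noteq> 0}"
  have mu_nz: "\<mu> \<noteq> 0" using lam(1) lam_v linear_0[OF weyl_linear[OF v(1)]] by auto
  have P_ne: "P \<noteq> {}"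
  proof
    assume "P = {}"
    then have "\<forall>l\<in>{1..r}. \<mu> \<bullet> b l = 0" by (auto simp: P_def)
    moreover have "\<mu> \<in> span (b ` {1..r})" using O_span[OF mu(1)] span_Phi by simp
    ultimately have "orthogonal \<mu> \<mu>" by - (rule orthogonal_to_span[where S="b ` {1..r}"], auto simp: orthogonal_def)
    then show False using mu_nz by (simp add: orthogonal_def)
  qed
  have Zcoef: "\<exists>c::nat\<Rightarrow>int. \<gamma> = (\<Sum>l\<in>{1..r}-P. of_int (c l) *\<^sub>R b l)" if "\<gamma> \<in> Z" for \<gamma>
  proof -
    have g: "\<gamma> \<in> \<Phi>" "\<gamma> \<bullet> \<mu> = 0" using that by (auto simp: Z_def)
    obtain c where c: "\<gamma> = (\<Sum>l=1..r. of_int (c l) *\<^sub>R b l)"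
      "(\<forall>i\<in>{1..r}. c i \<ge> 0) \<or> (\<forall>i\<in>{1..r}. c i \<le> 0)" using coords[OF g(1)] by blast
    define t where "t l = of_int (c l) * (b l \<bullet> \<mu>)" for l
    have st: "sum t {1..r} = 0" using g(2) c(1) by (simp add: inner_sum_left t_def)
    have bm: "l \<in> {1..r} \<Longrightarrow> b l \<bullet> \<mu> \<ge> 0" for l using dom[of l] by (simp add: inner_commute)
    have sg: "(\<forall>l\<in>{1..r}. t l \<ge> 0) \<or> (\<forall>l\<in>{1..r}. t l \<le> 0)"
      using c(2)
    proof (elim disjE)
      assume "\<forall>i\<in>{1..r}. 0 \<le> c i"
      then have "\<forall>l\<in>{1..r}. t l \<ge> 0" unfolding t_def using bm by (simp add: mult_nonneg_nonneg)
      then show ?thesis by blast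
    next
      assume "\<forall>i\<in>{1..r}. c i \<le> 0"
      then have "\<forall>l\<in>{1..r}. t l \<le> 0" unfolding t_def using bm by (simp add: mult_nonpos_nonneg)
      then show ?thesis by blast
    qed
    have z: "t l = 0" if "l \<in> {1..r}" for l
      by (rule sum_same_sign_zero[OF _ st sg that]) simp
    have "(\<Sum>l=1..r. of_int (c l) *\<^sub>R b l) = (\<Sum>l\<in>{1..r}-P. of_int (c l) *\<^sub>R b l)"
    proof (rule sum.mono_neutral_right)
      show "\<forall>l\<in>{1..r} - ({1..r} - P). of_int (c l) *\<^sub>R b l = 0"
      proof
        fix l assume l: "l \<in> {1..r} - ({1..r} - P)"
        then have "l \<in> P" by blast
        then have "b l \<bullet> \<mu> \<noteq> 0" "l \<in> {1..r}" by (auto simp: P_def inner_commute)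
        then have "c l = 0" using z[of l] by (simp add: t_def)
        then show "of_int (c l) *\<^sub>R b l = 0" by simp
      qed
    qed auto
    then have "\<gamma> = (\<Sum>l\<in>{1..r}-P. of_int (c l) *\<^sub>R b l)" using c(1) by simp
    then show ?thesis by blast
  qed
  have "r - 1 \<le> r - card P"
  proof -
    have "r - 1 = dim (v ` Z)" using rankPsi PsiZ by (simp add: rank_def)
    also have "\<dots> \<le> dim Z" by (rule dim_image_le[OF weyl_linear[OF v(1)]])
    also have "\<dots> \<le> card (b ` ({1..r} - P))"
    proof (rule dim_le_card)
      show "Z \<subseteq> span (b ` ({1..r} - P))"
      proof
        fix \<gamma> assume "\<gamma> \<in> Z"
        then obtain c where "\<gamma> = (\<Sum>l\<in>{1..r}-P. of_int (c l) *\<^sub>R b l)" using Zcoef by blast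
        moreover have "(\<Sum>l\<in>{1..r}-P. of_int (c l) *\<^sub>R b l) \<in> span (b ` ({1..r} - P))"
          by (intro span_sum span_scale span_base) auto
        ultimately show "\<gamma> \<in> span (b ` ({1..r} - P))" by simp
      qed
    qed simp
    also have "\<dots> \<le> card ({1..r} - P)" by (rule card_image_le) simp
    also have "\<dots> = r - card P" by (subst card_Diff_subset) (auto simp: P_def)
    finally show ?thesis .
  qed
  moreover have "card P \<ge> 1" using P_ne by (simp add: P_def Suc_le_eq card_gt_0_iff)
  moreover have "card P \<le> r" proof - have "P \<subseteq> {1..r}" by (auto simp: P_def) then have "card P \<le> card {1..r}" by (intro card_mono) auto then show ?thesis by simp qed
  ultimately have "card P = 1" using r_pos by linarith
  then obtain k where Pk: "P = {k}" by (rule card_1_singletonE)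
  then have k1: "k \<in> {1..r}" by (auto simp: P_def)
  have Kset: "{0..r} - {0, k} = {1..r} - {k}" by auto
  have ZEq: "Z = \<Phi> \<inter> int_span (aff_root b \<theta>) ({0..r} - {0, k})"
  proof
    show "Z \<subseteq> \<Phi> \<inter> int_span (aff_root b \<theta>) ({0..r} - {0, k})"
    proof
      fix \<gamma> assume "\<gamma> \<in> Z"
      then obtain c where c: "\<gamma> = (\<Sum>l\<in>{1..r}-{k}. of_int (c l) *\<^sub>R b l)" using Zcoef[OF \<open>\<gamma> \<in> Z\<close>] unfolding Pk by blast
      also have "\<dots> = (\<Sum>l\<in>{0..r}-{0,k}. of_int (c l) *\<^sub>R aff_root b \<theta> l)"
        unfolding Kset by (rule sum.cong) (auto simp: aff_root_def)
      finally have "\<gamma> \<in> int_span (aff_root b \<theta>) ({0..r} - {0, k})"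
        unfolding int_span_def by (rule CollectI[of _ \<gamma>, OF exI[of _ c]])
      moreover have "\<gamma> \<in> \<Phi>" using \<open>\<gamma> \<in> Z\<close> by (simp add: Z_def)
      ultimately show "\<gamma> \<in> \<Phi> \<inter> int_span (aff_root b \<theta>) ({0..r} - {0, k})" by blast
    qed
    show "\<Phi> \<inter> int_span (aff_root b \<theta>) ({0..r} - {0, k}) \<subseteq> Z"
    proof
      fix \<gamma> assume H: "\<gamma> \<in> \<Phi> \<inter> int_span (aff_root b \<theta>) ({0..r} - {0, k})"
      then obtain d where "\<gamma> = (\<Sum>l\<in>{0..r}-{0,k}. of_int (d l) *\<^sub>R aff_root b \<theta> l)" by (auto simp: int_span_def)
      also have "\<dots> = (\<Sum>l\<in>{1..r}-{k}. of_int (d l) *\<^sub>R b l)"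
        unfolding Kset by (rule sum.cong) (auto simp: aff_root_def)
      finally have "\<gamma> \<bullet> \<mu> = (\<Sum>l\<in>{1..r}-{k}. of_int (d l) * (b l \<bullet> \<mu>))" by (simp add: inner_sum_left)
      also have "\<dots> = 0"
      proof (rule sum.neutral, rule ballI)
        fix l assume l: "l \<in> {1..r} - {k}"
        then have "l \<notin> P" using Pk by blast
        then have "\<mu> \<bullet> b l = 0" using l unfolding P_def by blast
        then show "of_int (d l) * (b l \<bullet> \<mu>) = 0" by (simp add: inner_commute)
      qed
      finally show "\<gamma> \<in> Z" using H by (simp add: Z_def)
    qed
  qed
  have "gcd (aff_label m 0) (aff_label m k) = 1" by (simp add: aff_label_def)
  moreover have "\<Psi> = v ` (\<Phi> \<inter> int_span (aff_root b \<theta>) ({0..r} - {0, k}))" using PsiZ ZEq by simp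
  moreover have "(0::nat) \<le> r" "k \<le> r" "0 \<noteq> k" using k1 by auto
  ultimately show ?thesis using v(1) by (intro exI[of _ 0] exI[of _ k] exI[of _ v] conjI)
qed

end


theorem theoremA:
  fixes \<Phi> :: "'a::euclidean_space set" and r :: nat and b :: "nat \<Rightarrow> 'a"
    and \<theta> :: 'a and m :: "nat \<Rightarrow> int"
  assumes "root_system \<Phi>" and "irreducible_rs \<Phi>" and "rank \<Phi> = r"
    and "is_base \<Phi> r b" and "is_highest_root \<Phi> r b \<theta> m"
  shows "(\<forall>i j. i \<le> r \<and> j \<le> r \<and> i \<noteq> j \<and> gcd (aff_label m i) (aff_label m j) = 1 \<longrightarrow>
            good_subsystem \<Phi> (\<Phi> \<inter> int_span (aff_root b \<theta>) ({0..r} - {i, j})))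
       \<and> (\<forall>\<Psi>. good_subsystem \<Phi> \<Psi> \<longrightarrow>
            (\<exists>i j w. i \<le> r \<and> j \<le> r \<and> i \<noteq> j \<and> gcd (aff_label m i) (aff_label m j) = 1
               \<and> w \<in> weyl_group \<Phi>
               \<and> \<Psi> = w ` (\<Phi> \<inter> int_span (aff_root b \<theta>) ({0..r} - {i, j}))))"
proof -
  interpret rsetup \<Phi> r b \<theta> m using assms by unfold_locales
  show ?thesis
  proof (intro conjI allI impI)
    fix i j assume H: "i \<le> r \<and> j \<le> r \<and> i \<noteq> j \<and> gcd (aff_label m i) (aff_label m j) = 1"
    show "good_subsystem \<Phi> (\<Phi> \<inter> int_span (aff_root b \<theta>) ({0..r} - {i, j}))"
      using part1'[of i j] H by blast
  next
    fix \<Psi> assume "good_subsystem \<Phi> \<Psi>"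
    then show "\<exists>i j w. i \<le> r \<and> j \<le> r \<and> i \<noteq> j \<and> gcd (aff_label m i) (aff_label m j) = 1
               \<and> w \<in> weyl_group \<Phi>
               \<and> \<Psi> = w ` (\<Phi> \<inter> int_span (aff_root b \<theta>) ({0..r} - {i, j}))"
      by (rule part2)
  qed
qed

end
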